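(* Let $S$ be a semigroup with a left unit. If $\ell^{1}(S)$ is approximately biprojective and has a right approximate identity, then $S$ is finite.
   Context: A left unit of $S$ is $e\in S$ with $es=s$ for all $s\in S$. $\ell^1(S)$ is the semigroup algebra. A Banach algebra $A$ is approximately biprojective if there is a net $(\rho_\alpha)$ of continuous $A$-bimodule morphisms $A\to A\otimes_pA$ with $\pi_A\circ\rho_\alpha(a)\to a$ for all $a\in A$, where $\pi_A(a\otimes b)=ab$. *)

theory Defs
  imports "HOL-Analysis.Analysis"
begin

definition l1 :: "('x \<Rightarrow> complex) set" where
  "l1 = {f. (\<lambda>x. norm (f x)) summable_on UNIV}"

definition l1norm :: "('x \<Rightarrow> complex) \<Rightarrow> real" where
  "l1norm f = (\<Sum>\<^sub>\<infinity>x. norm (f x))"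

definition conv :: "('s::semigroup_mult \<Rightarrow> complex) \<Rightarrow> ('s \<Rightarrow> complex) \<Rightarrow> 's \<Rightarrow> complex" where
  "conv f g t = (\<Sum>\<^sub>\<infinity>(r, s) \<in> {(r, s). r * s = t}. f r * g s)"

text \<open>The projective tensor product l1(S) (x)_p l1(S) is identified (isometrically) with
  l1(S x S), via delta_r (x) delta_s |-> delta_(r,s).\<close>

definition lmod :: "('s::semigroup_mult \<Rightarrow> complex) \<Rightarrow> ('s \<times> 's \<Rightarrow> complex) \<Rightarrow> 's \<times> 's \<Rightarrow> complex" where
  "lmod a F = (\<lambda>(x, y). \<Sum>\<^sub>\<infinity>(r, u) \<in> {(r, u). r * u = x}. a r * F (u, y))"

definition rmod :: "('s::semigroup_mult \<times> 's \<Rightarrow> complex) \<Rightarrow> ('s \<Rightarrow> complex) \<Rightarrow> 's \<times> 's \<Rightarrow> complex" where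
  "rmod F a = (\<lambda>(x, y). \<Sum>\<^sub>\<infinity>(v, r) \<in> {(v, r). v * r = y}. F (x, v) * a r)"

definition piS :: "('s::semigroup_mult \<times> 's \<Rightarrow> complex) \<Rightarrow> 's \<Rightarrow> complex" where
  "piS F t = (\<Sum>\<^sub>\<infinity>(r, s) \<in> {(r, s). r * s = t}. F (r, s))"

definition bimod_morph :: "(('s::semigroup_mult \<Rightarrow> complex) \<Rightarrow> ('s \<times> 's \<Rightarrow> complex)) \<Rightarrow> bool" where
  "bimod_morph \<rho> \<longleftrightarrow>
     (\<forall>a\<in>l1. \<rho> a \<in> l1) \<and>
     (\<forall>a\<in>l1. \<forall>b\<in>l1. \<rho> (\<lambda>x. a x + b x) = (\<lambda>p. \<rho> a p + \<rho> b p)) \<and>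
     (\<forall>a\<in>l1. \<forall>c::complex. \<rho> (\<lambda>x. c * a x) = (\<lambda>p. c * \<rho> a p)) \<and>
     (\<exists>C. \<forall>a\<in>l1. l1norm (\<rho> a) \<le> C * l1norm a) \<and>
     (\<forall>a\<in>l1. \<forall>b\<in>l1. \<rho> (conv a b) = lmod a (\<rho> b) \<and> \<rho> (conv a b) = rmod (\<rho> a) b)"

text \<open>Nets are represented by (proper) filters, the standard Isabelle idiom.\<close>

definition approx_biprojective :: "'s::semigroup_mult itself \<Rightarrow> bool" where
  "approx_biprojective _ \<longleftrightarrow>
     (\<exists>F :: (('s \<Rightarrow> complex) \<Rightarrow> ('s \<times> 's \<Rightarrow> complex)) filter.
        F \<noteq> bot \<and> eventually bimod_morph F \<and>
        (\<forall>a\<in>l1. ((\<lambda>\<rho>. l1norm (\<lambda>t. piS (\<rho> a) t - a t)) \<longlongrightarrow> 0) F))"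

definition has_right_approx_identity :: "'s::semigroup_mult itself \<Rightarrow> bool" where
  "has_right_approx_identity _ \<longleftrightarrow>
     (\<exists>F :: ('s \<Rightarrow> complex) filter.
        F \<noteq> bot \<and> eventually (\<lambda>e. e \<in> l1) F \<and>
        (\<forall>a\<in>l1. ((\<lambda>e. l1norm (\<lambda>t. conv a e t - a t)) \<longlongrightarrow> 0) F))"

end

theory Submission
  imports Defs
begin


abbreviation ab :: "('a \<Rightarrow> 'b::real_normed_vector) \<Rightarrow> 'a set \<Rightarrow> bool" where
  "ab f A \<equiv> (\<lambda>x. norm (f x)) summable_on A"

definition push :: "('a \<Rightarrow> 'b) \<Rightarrow> ('a \<Rightarrow> 'c::banach) \<Rightarrow> 'b \<Rightarrow> 'c" where
  "push \<phi> f b = infsum f {a. \<phi> a = b}"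

lemma push_sum:
  fixes f :: "'a \<Rightarrow> 'c::banach"
  assumes "f summable_on (\<phi> -` W)"
  shows "push \<phi> f summable_on W" "infsum (push \<phi> f) W = infsum f (\<phi> -` W)"
proof -
  have eq: "(f summable_on (\<phi> -` W)) = ((\<lambda>(b,a). f a) summable_on (Sigma W (\<lambda>b. {a. \<phi> a = b})))"
    by (rule summable_on_reindex_bij_witness[where i=snd and j="\<lambda>a. (\<phi> a, a)"]) auto
  have S: "(\<lambda>(b,a). f a) summable_on (Sigma W (\<lambda>b. {a. \<phi> a = b}))"
    using assms eq by simp
  have "infsum f (\<phi> -` W) = infsum (\<lambda>(b,a). f a) (Sigma W (\<lambda>b. {a. \<phi> a = b}))"
    by (rule infsum_reindex_bij_witness[where i=snd and j="\<lambda>a. (\<phi> a, a)"]) auto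
  also have "\<dots> = infsum (\<lambda>b. infsum (\<lambda>a. f a) {a. \<phi> a = b}) W"
    using infsum_Sigma'_banach[of "\<lambda>b a. f a" W "\<lambda>b. {a. \<phi> a = b}"] S by simp
  finally show "infsum (push \<phi> f) W = infsum f (\<phi> -` W)" unfolding push_def by simp
  show "push \<phi> f summable_on W"
    using summable_on_Sigma_banach[of "\<lambda>b a. f a" W "\<lambda>b. {a. \<phi> a = b}"] S
    unfolding push_def by simp
qed

lemma push_abs:
  fixes f :: "'a \<Rightarrow> 'c::banach"
  assumes "ab f UNIV"
  shows "ab (push \<phi> f) UNIV"
    "infsum (\<lambda>b. norm (push \<phi> f b)) W \<le> infsum (\<lambda>a. norm (f a)) (\<phi> -` W)"
proof -
  let ?n = "\<lambda>a. norm (f a)"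
  have nW: "?n summable_on (\<phi> -` V)" for V
    using assms summable_on_subset_banach by blast
  have fs: "f summable_on A" for A
    using abs_summable_summable assms summable_on_subset_banach by blast
  have bound: "norm (push \<phi> f b) \<le> push \<phi> ?n b" for b
    unfolding push_def
    by (rule norm_infsum_bound) (use assms summable_on_subset_banach in blast)
  have pn: "push \<phi> ?n summable_on V" for V
    using push_sum(1)[OF nW] by blast
  show "ab (push \<phi> f) UNIV"
    by (rule summable_on_comparison_test[OF pn]) (use bound in auto)
  then have "(\<lambda>b. norm (push \<phi> f b)) summable_on W"
    using summable_on_subset_banach by blast
  then have "infsum (\<lambda>b. norm (push \<phi> f b)) W \<le> infsum (push \<phi> ?n) W"
    by (intro infsum_mono pn bound)
  also have "\<dots> = infsum ?n (\<phi> -` W)" using push_sum(2)[OF nW] .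
  finally show "infsum (\<lambda>b. norm (push \<phi> f b)) W \<le> infsum (\<lambda>a. norm (f a)) (\<phi> -` W)" .
qed



definition dlt :: "'a \<Rightarrow> 'a \<Rightarrow> complex" where
  "dlt z = (\<lambda>r. if r = z then 1 else 0)"

lemma infsum_dlt: "infsum (dlt z) A = (if z \<in> A then 1 else 0)"
proof -
  have "infsum (dlt z) A = infsum (dlt z) (A \<inter> {z})"
    by (rule infsum_cong_neutral) (auto simp: dlt_def)
  also have "\<dots> = (if z \<in> A then 1 else 0)"
    by (cases "z \<in> A") (auto simp: dlt_def)
  finally show ?thesis .
qed

lemma dlt_abs: "ab (dlt z) A"
proof -
  have "(\<lambda>x. norm (dlt z x)) summable_on {z}" by simp
  then have "ab (dlt z) UNIV"
    by (rule summable_on_cong_neutral[THEN iffD1, rotated -1]) (auto simp: dlt_def)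
  then show ?thesis using summable_on_subset_banach by blast
qed

lemma abs_diff:
  fixes f g :: "'a \<Rightarrow> 'b::real_normed_vector"
  assumes "ab f A" "ab g A"
  shows "ab (\<lambda>x. f x - g x) A"
proof -
  have "(\<lambda>x. norm (f x) + norm (g x)) summable_on A"
    using assms summable_on_add by blast
  then show ?thesis
    by (rule summable_on_comparison_test) (auto intro: norm_triangle_ineq4)
qed

lemma norm_tail_mono:
  fixes f :: "'a \<Rightarrow> 'b::real_normed_vector"
  assumes "ab f UNIV" "A \<subseteq> B"
  shows "infsum (\<lambda>x. norm (f x)) A \<le> infsum (\<lambda>x. norm (f x)) B"
proof (rule infsum_mono2)
  show "(\<lambda>x. norm (f x)) summable_on A" "(\<lambda>x. norm (f x)) summable_on B"
    using assms(1) summable_on_subset_banach by blast+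
qed (use assms in auto)

lemma norm_infsum_l1:
  fixes f :: "'a \<Rightarrow> 'b::banach"
  assumes "ab f UNIV"
  shows "norm (infsum f A) \<le> infsum (\<lambda>x. norm (f x)) A"
  by (rule norm_infsum_bound) (use assms summable_on_subset_banach in blast)

lemma conv_dlt: "conv (dlt z) f = push (\<lambda>u. z * u) f"
proof
  fix x
  have "conv (dlt z) f x = infsum (\<lambda>(r,s). f s) (Pair z ` {s. z * s = x})"
    unfolding conv_def
    by (rule infsum_cong_neutral) (auto simp: dlt_def)
  also have "\<dots> = infsum f {s. z * s = x}"
    by (subst infsum_reindex) (auto simp: inj_on_def o_def)
  finally show "conv (dlt z) f x = push (\<lambda>u. z * u) f x"
    unfolding push_def .
qed

lemma lmod_dlt: "lmod (dlt z) F = push (\<lambda>(u,y). (z * u, y)) F"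
proof
  fix p :: "'a \<times> 'a"
  obtain x y where p: "p = (x,y)" by fastforce
  have "lmod (dlt z) F (x,y) = infsum (\<lambda>(r,u). F (u,y)) (Pair z ` {u. z * u = x})"
    unfolding lmod_def
    by (simp, rule infsum_cong_neutral) (auto simp: dlt_def)
  also have "\<dots> = infsum (\<lambda>u. F (u,y)) {u. z * u = x}"
    by (subst infsum_reindex) (auto simp: inj_on_def o_def)
  also have "\<dots> = infsum F ((\<lambda>u. (u,y)) ` {u. z * u = x})"
    by (subst infsum_reindex) (auto simp: inj_on_def o_def)
  also have "(\<lambda>u. (u,y)) ` {u. z * u = x} = {a. (case a of (u,y) \<Rightarrow> (z * u, y)) = (x,y)}"
    by auto
  finally show "lmod (dlt z) F p = push (\<lambda>(u,y). (z * u, y)) F p"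
    unfolding push_def p .
qed

lemma rmod_dlt: "rmod F (dlt z) = push (\<lambda>(x,v). (x, v * z)) F"
proof
  fix p :: "'a \<times> 'a"
  obtain x y where p: "p = (x,y)" by fastforce
  have "rmod F (dlt z) (x,y) = infsum (\<lambda>(v,r). F (x,v)) ((\<lambda>v. (v,z)) ` {v. v * z = y})"
    unfolding rmod_def
    by (simp, rule infsum_cong_neutral) (auto simp: dlt_def)
  also have "\<dots> = infsum (\<lambda>v. F (x,v)) {v. v * z = y}"
    by (subst infsum_reindex) (auto simp: inj_on_def o_def)
  also have "\<dots> = infsum F ((\<lambda>v. (x,v)) ` {v. v * z = y})"
    by (subst infsum_reindex) (auto simp: inj_on_def o_def)
  also have "(\<lambda>v. (x,v)) ` {v. v * z = y} = {a. (case a of (x,v) \<Rightarrow> (x, v * z)) = (x,y)}"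
    by auto
  finally show "rmod F (dlt z) p = push (\<lambda>(x,v). (x, v * z)) F p"
    unfolding push_def p .
qed

lemma piS_push: "piS F = push (\<lambda>(r,s). r * s) F"
  unfolding piS_def push_def by (auto intro!: ext infsum_cong_neutral)

lemma l1_iff: "f \<in> l1 \<longleftrightarrow> ab f UNIV"
  by (simp add: l1_def)



lemma norm_pt: "ab f UNIV \<Longrightarrow> norm (f x) \<le> l1norm f"
  using norm_tail_mono[of f "{x}" UNIV] unfolding l1norm_def by simp

lemma norm_sub_l1: "ab f UNIV \<Longrightarrow> infsum (\<lambda>x. norm (f x)) A \<le> l1norm f"
  using norm_tail_mono[of f A UNIV] unfolding l1norm_def by simp

lemma conv_dlt_e: assumes e: "\<forall>s. e * s = s" shows "conv (dlt e) f = f"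
proof
  fix x
  have "{u. e * u = x} = {x}" using e by auto
  then show "conv (dlt e) f x = f x" by (simp add: conv_dlt push_def)
qed

lemma right_unit:
  fixes e :: "'s::semigroup_mult"
  assumes e: "\<forall>s. e * s = s" and R: "has_right_approx_identity TYPE('s)"
  shows "z * e = z"
proof (rule ccontr)
  assume ne: "z * e \<noteq> z"
  from R obtain F :: "('s \<Rightarrow> complex) filter" where
    F: "F \<noteq> bot" "eventually (\<lambda>f. f \<in> l1) F"
    and lim: "\<forall>a\<in>l1. ((\<lambda>f. l1norm (\<lambda>t. conv a f t - a t)) \<longlongrightarrow> 0) F"
    unfolding has_right_approx_identity_def by blast
  have d: "dlt w \<in> l1" for w by (simp add: l1_iff dlt_abs)
  have ev: "eventually (\<lambda>f. l1norm (\<lambda>t. conv (dlt w) f t - dlt w t) < 1/2) F" for w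
  proof -
    have "((\<lambda>f. l1norm (\<lambda>t. conv (dlt w) f t - dlt w t)) \<longlongrightarrow> 0) F" using bspec[OF lim d] .
    from order_tendstoD(2)[OF this, of "1/2"] show ?thesis by simp
  qed
  obtain f where f: "f \<in> l1" "l1norm (\<lambda>t. conv (dlt e) f t - dlt e t) < 1/2"
    "l1norm (\<lambda>t. conv (dlt z) f t - dlt z t) < 1/2"
  proof -
    have "eventually (\<lambda>f. f \<in> l1 \<and> l1norm (\<lambda>t. conv (dlt e) f t - dlt e t) < 1/2
       \<and> l1norm (\<lambda>t. conv (dlt z) f t - dlt z t) < 1/2) F"
      by (intro eventually_conj F(2) ev)
    from eventually_happens'[OF F(1) this] show ?thesis using that by blast
  qed
  have fa: "ab f UNIV" using f(1) by (simp add: l1_iff)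
  define h where "h = (\<lambda>t. f t - dlt e t)"
  have h1: "l1norm h < 1/2" using f(2) unfolding h_def conv_dlt_e[OF e] .
  have ha: "ab h UNIV" unfolding h_def by (rule abs_diff[OF fa dlt_abs])
  define g where "g = (\<lambda>t. conv (dlt z) f t - dlt z t)"
  have ga: "ab g UNIV" unfolding g_def conv_dlt by (rule abs_diff[OF push_abs(1)[OF fa] dlt_abs])
  define U where "U = {u. z * u = z}"
  have gz: "g z = infsum f U - 1" unfolding g_def conv_dlt push_def U_def by (simp add: dlt_def)
  have g1: "l1norm g < 1/2" unfolding g_def using f(3) .
  have g2: "norm (g z) < 1/2" using norm_pt[OF ga, of z] g1 by linarith
  have "infsum f U = infsum h U"
    by (rule infsum_cong) (use ne in \<open>auto simp: h_def dlt_def U_def\<close>)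
  moreover have "norm (infsum h U) < 1/2"
    using norm_infsum_l1[OF ha, of U] norm_sub_l1[OF ha, of U] h1 by linarith
  ultimately have n1: "norm (infsum f U) < 1/2" by simp
  have "norm (1::complex) \<le> norm (infsum f U) + norm (infsum f U - 1)"
    using norm_triangle_ineq4[of "infsum f U" "infsum f U - 1"] by simp
  then have "norm (1::complex) < 1" using n1 g2 gz by simp
  then show False by simp
qed



lemma tight:
  fixes f :: "'a \<Rightarrow> 'b::banach"
  assumes "ab f UNIV" "\<epsilon> > 0"
  shows "\<exists>F0. finite F0 \<and> infsum (\<lambda>x. norm (f x)) (- F0) \<le> \<epsilon>"
proof -
  let ?n = "\<lambda>x. norm (f x)"
  obtain F0 where F0: "finite F0" "dist (sum ?n F0) (infsum ?n UNIV) \<le> \<epsilon>"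
    using infsum_finite_approximation[OF assms] by blast
  have "infsum ?n UNIV = infsum ?n (F0 \<union> - F0)" by simp
  also have "\<dots> = infsum ?n F0 + infsum ?n (- F0)"
    by (rule infsum_Un_disjoint) (use assms(1) summable_on_subset_banach in auto)
  also have "infsum ?n F0 = sum ?n F0" using F0(1) by simp
  finally have "infsum ?n (- F0) = infsum ?n UNIV - sum ?n F0" by simp
  then have "infsum ?n (- F0) \<le> \<epsilon>" using F0(2) by (simp add: dist_real_def)
  then show ?thesis using F0(1) by blast
qed

lemma sum_on: "ab f UNIV \<Longrightarrow> (f :: 'a \<Rightarrow> 'b::banach) summable_on A"
  using abs_summable_summable summable_on_subset_banach by blast

theorem mainTheorem6:
  assumes "\<exists>e::'s::semigroup_mult. \<forall>s. e * s = s"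
    and "approx_biprojective TYPE('s)"
    and "has_right_approx_identity TYPE('s)"
  shows "finite (UNIV :: 's set)"
proof (rule ccontr)
  assume inf: "infinite (UNIV :: 's set)"
  obtain e :: 's where e: "\<forall>s. e * s = s" using assms(1) by blast
  have ru: "z * e = z" for z using right_unit[OF e assms(3)] .
  from assms(2) obtain G :: "(('s \<Rightarrow> complex) \<Rightarrow> ('s \<times> 's \<Rightarrow> complex)) filter" where
    G: "G \<noteq> bot" "eventually bimod_morph G"
    and lim: "\<forall>a\<in>l1. ((\<lambda>\<rho>. l1norm (\<lambda>t. piS (\<rho> a) t - a t)) \<longlongrightarrow> 0) G"
    unfolding approx_biprojective_def by blast
  have d: "dlt w \<in> l1" for w :: 's by (simp add: l1_iff dlt_abs)
  have ev: "eventually (\<lambda>\<rho>. l1norm (\<lambda>t. piS (\<rho> (dlt e)) t - dlt e t) < 1/4) G"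
  proof -
    have "((\<lambda>\<rho>. l1norm (\<lambda>t. piS (\<rho> (dlt e)) t - dlt e t)) \<longlongrightarrow> 0) G" using bspec[OF lim d] .
    from order_tendstoD(2)[OF this, of "1/4"] show ?thesis by simp
  qed
  obtain \<rho> where \<rho>: "bimod_morph \<rho>" "l1norm (\<lambda>t. piS (\<rho> (dlt e)) t - dlt e t) < 1/4"
  proof -
    have "eventually (\<lambda>\<rho>. bimod_morph \<rho> \<and> l1norm (\<lambda>t. piS (\<rho> (dlt e)) t - dlt e t) < 1/4) G"
      by (intro eventually_conj G(2) ev)
    from eventually_happens'[OF G(1) this] show ?thesis using that by blast
  qed
  define M where "M = \<rho> (dlt e)"
  have "\<rho> (dlt e) \<in> l1" using \<rho>(1) d unfolding bimod_morph_def by blast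
  then have Ma: "ab M UNIV" unfolding M_def l1_iff .
  have mod: "\<rho> (conv a b) = lmod a (\<rho> b)" "\<rho> (conv a b) = rmod (\<rho> a) b" if "a \<in> l1" "b \<in> l1" for a b
    using \<rho>(1) that unfolding bimod_morph_def by blast+
  define pi :: "'s \<times> 's \<Rightarrow> 's" where "pi = (\<lambda>(r,s). r * s)"
  define c where "c = piS M"
  have c_push: "c = push pi M" unfolding c_def pi_def by (rule piS_push)
  have ca: "ab c UNIV" unfolding c_push by (rule push_abs(1)[OF Ma])
  define k where "k = (\<lambda>t. c t - dlt e t)"
  have ka: "ab k UNIV" unfolding k_def by (rule abs_diff[OF ca dlt_abs])
  have k1: "l1norm k < 1/4" using \<rho>(2) unfolding k_def c_def M_def .
  obtain F0 where F0: "finite F0" "infsum (\<lambda>x. norm (M x)) (- F0) \<le> 1/16"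
    using tight[OF Ma, of "1/16"] by auto
  define F where "F = fst ` F0 \<union> snd ` F0"
  have "finite ((\<lambda>p. fst p * snd p) ` (F \<times> F))" using F0(1) unfolding F_def by simp
  then obtain z where z: "z \<notin> (\<lambda>p. fst p * snd p) ` (F \<times> F)"
    using ex_new_if_finite[OF inf] by blast
  define Lz :: "'s \<times> 's \<Rightarrow> 's \<times> 's" where "Lz = (\<lambda>(u,y). (z * u, y))"
  define Rz :: "'s \<times> 's \<Rightarrow> 's \<times> 's" where "Rz = (\<lambda>(x,v). (x, v * z))"
  have cd1: "conv (dlt z) (dlt e) = dlt z"
  proof
    fix x
    show "conv (dlt z) (dlt e) x = dlt z x"
      unfolding conv_dlt push_def infsum_dlt using ru[of z] by (auto simp: dlt_def)
  qed
  have cd2: "conv (dlt e) (dlt z) = dlt z" by (rule conv_dlt_e[OF e])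
  define N where "N = push Lz M"
  have NR: "N = push Rz M"
  proof -
    have "lmod (dlt z) M = \<rho> (dlt z)" using mod(1)[OF d d, of z e] cd1 M_def by simp
    moreover have "rmod M (dlt z) = \<rho> (dlt z)" using mod(2)[OF d d, of e z] cd2 M_def by simp
    ultimately show ?thesis unfolding N_def Lz_def Rz_def lmod_dlt rmod_dlt by simp
  qed
  have Na: "ab N UNIV" unfolding N_def by (rule push_abs(1)[OF Ma])
  define Fib where "Fib = {p. pi p = z}"
  define P where "P = infsum N Fib"
  define W where "W = {w. w * z = z}"
  have "P = infsum M (Rz -` Fib)" unfolding P_def NR by (rule push_sum(2)[OF sum_on[OF Ma]])
  also have "Rz -` Fib = pi -` W"
    unfolding Rz_def Fib_def pi_def W_def by (auto simp: mult.assoc)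
  also have "infsum M (pi -` W) = infsum c W"
    unfolding c_push by (rule push_sum(2)[OF sum_on[OF Ma], symmetric])
  finally have Pc: "P = infsum c W" .
  have "infsum c W = infsum (\<lambda>t. k t + dlt e t) W" unfolding k_def by simp
  also have "\<dots> = infsum k W + infsum (dlt e) W"
    by (rule infsum_add) (use sum_on[OF ka] sum_on[OF dlt_abs] in auto)
  also have "infsum (dlt e) W = 1" unfolding infsum_dlt W_def using e by simp
  finally have Pk: "P - 1 = infsum k W" using Pc by simp
  have P1: "norm (P - 1) < 1/4"
    unfolding Pk using norm_infsum_l1[OF ka, of W] norm_sub_l1[OF ka, of W] k1 by linarith
  define A where "A = {p :: 's \<times> 's. snd p \<notin> F}"
  define B where "B = {p :: 's \<times> 's. fst p \<notin> F}"
  have MF: "infsum (\<lambda>x. norm (M x)) X \<le> 1/16" if "X \<subseteq> - F0" for X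
    using norm_tail_mono[OF Ma that] F0(2) by linarith
  have "P = infsum N ((Fib \<inter> A) \<union> (Fib - A))" unfolding P_def by (simp add: Int_Diff_Un)
  also have "\<dots> = infsum N (Fib \<inter> A) + infsum N (Fib - A)"
    by (rule infsum_Un_disjoint) (use sum_on[OF Na] in auto)
  finally have Psplit: "P = infsum N (Fib \<inter> A) + infsum N (Fib - A)" .
  have nA: "norm (infsum N (Fib \<inter> A)) \<le> 1/16"
  proof -
    have "norm (infsum N (Fib \<inter> A)) \<le> infsum (\<lambda>x. norm (N x)) (Fib \<inter> A)" by (rule norm_infsum_l1[OF Na])
    also have "\<dots> \<le> infsum (\<lambda>x. norm (N x)) A" by (rule norm_tail_mono[OF Na]) auto
    also have "\<dots> \<le> infsum (\<lambda>x. norm (M x)) (Lz -` A)" unfolding N_def by (rule push_abs(2)[OF Ma])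
    also have "\<dots> \<le> 1/16"
      by (rule MF) (auto simp: Lz_def A_def F_def split: prod.splits, force)
    finally show ?thesis .
  qed
  have nB: "norm (infsum N (Fib - A)) \<le> 1/16"
  proof -
    have sub: "Fib - A \<subseteq> B"
    proof
      fix p assume p: "p \<in> Fib - A"
      show "p \<in> B"
      proof (rule ccontr)
        assume "p \<notin> B"
        then have "p \<in> F \<times> F" using p unfolding A_def B_def by (cases p) auto
        moreover have "fst p * snd p = z" using p unfolding Fib_def pi_def by (cases p) auto
        ultimately show False using z by force
      qed
    qed
    have "norm (infsum N (Fib - A)) \<le> infsum (\<lambda>x. norm (N x)) (Fib - A)" by (rule norm_infsum_l1[OF Na])
    also have "\<dots> \<le> infsum (\<lambda>x. norm (N x)) B" by (rule norm_tail_mono[OF Na sub])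
    also have "\<dots> \<le> infsum (\<lambda>x. norm (M x)) (Rz -` B)" unfolding NR by (rule push_abs(2)[OF Ma])
    also have "\<dots> \<le> 1/16"
      by (rule MF) (auto simp: Rz_def B_def F_def split: prod.splits, force)
    finally show ?thesis .
  qed
  have "norm P \<le> 1/8" unfolding Psplit using nA nB norm_triangle_ineq[of "infsum N (Fib \<inter> A)" "infsum N (Fib - A)"]
    by linarith
  moreover have "norm (1::complex) \<le> norm P + norm (P - 1)"
    using norm_triangle_ineq4[of P "P - 1"] by simp
  ultimately have "norm (1::complex) < 1" using P1 by linarith
  then show False by simp
qed


end
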